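(* Let $\alpha\in(0,1/2)$ and $v\in\mathcal{C}^\alpha(\mathbb{R}^d)$. Assume that $I^{\mathrm{It\hat o}}_k(v,dv)$ converges uniformly to a limit $I^{\mathrm{It\hat o}}(v,dv)$ as $k\to\infty$. Then $[v,v]_k$ converges uniformly to a limit $[v,v]$. If moreover \[ C:=\sup_k\sup_{0\le m<m'\le2^k}\frac{\big|I^{\mathrm{It\hat o}}_k(v,dv)(m'2^{-k})-I^{\mathrm{It\hat o}}_k(v,dv)(m2^{-k})-v(m2^{-k})\big(v(m'2^{-k})-v(m2^{-k})\big)\big|}{|(m'-m)2^{-k}|^{2\alpha}}<\infty, \] then $[v,v]\in\mathcal{C}^{2\alpha}$ and $\|[v,v]\|_{2\alpha}\lesssim C+\|v\|_\alpha^2$.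
   Context: For $p\in\mathbb{N}$, $1\le m\le2^p$: $t^0_{pm}=(m-1)2^{-p}$, $t^2_{pm}=m2^{-p}$. For continuous $f:[0,1]\to E$ the Schauder coefficients are $f_{-10}=f(0)$, $f_{00}=f(1)-f(0)$, $f_{p0}=0$ ($p\ge1$), $f_{pm}=2f((2m-1)2^{-p-1})-f((m-1)2^{-p})-f(m2^{-p})$ ($p\ge0,m\ge1$); $\|f\|_\alpha:=\sup_{p,m}2^{p\alpha}|f_{pm}|$, $\mathcal{C}^\alpha:=\{f\text{ continuous}:\|f\|_\alpha<\infty\}$ (for $\alpha\in(0,1)$ equal to the $\alpha$-Hölder space with equivalent norm). For $v=(v^1,\dots,v^d)$, $I^{\mathrm{It\hat o}}_k(v,dv)$ is the $d\times d$ matrix $(I^{\mathrm{It\hat o}}_k(v^i,dv^j))_{i,j}$ with \[ I^{\mathrm{It\hat o}}_k(g,dh)(t):=\sum_{m=1}^{2^k}g(t^0_{km})\big(h(t^2_{km}\wedge t)-h(t^0_{km}\wedge t)\big), \] $[v,v]_k:=([v^i,v^j]_k)_{i,j}$ with $[g,h]_k(t):=\sum_{m=1}^{2^k}(g(t^2_{km}\wedge t)-g(t^0_{km}\wedge t))(h(t^2_{km}\wedge t)-h(t^0_{km}\wedge t))$, and $v(s)(v(t)-v(s))$ denotes the matrix $(v^i(s)(v^j(t)-v^j(s)))_{i,j}$. *)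

theory Defs
  imports "HOL-Analysis.Analysis"
begin

text \<open>Schauder coefficients f_{pm} of f : [0,1] -> E, with p ranging over {-1} and the naturals
 (encoded as an int), m a natural number.\<close>
definition schauder_coeff :: "(real \<Rightarrow> 'a::real_normed_vector) \<Rightarrow> int \<Rightarrow> nat \<Rightarrow> 'a" where
  "schauder_coeff f p m =
     (if p = -1 \<and> m = 0 then f 0
      else if p = 0 \<and> m = 0 then f 1 - f 0
      else if p \<ge> 1 \<and> m = 0 then 0
      else if p \<ge> 0 \<and> 1 \<le> m \<and> m \<le> 2 ^ nat p then
        2 *\<^sub>R f ((2 * real m - 1) / 2 ^ (nat p + 1)) - f ((real m - 1) / 2 ^ nat p) - f (real m / 2 ^ nat p)
      else 0)"

definition schauder_index :: "(int \<times> nat) set" where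
  "schauder_index = {(p, m). (p = -1 \<and> m = 0) \<or> (p \<ge> 0 \<and> m \<le> 2 ^ nat p)}"

definition schauder_vals :: "real \<Rightarrow> (real \<Rightarrow> 'a::real_normed_vector) \<Rightarrow> real set" where
  "schauder_vals \<alpha> f = {2 powr (real_of_int p * \<alpha>) * norm (schauder_coeff f p m) | p m. (p, m) \<in> schauder_index}"

text \<open>The norm ||f||_alpha = sup_{p,m} 2^{p alpha} |f_{pm}| (meaningful when finite).\<close>
definition schauder_norm :: "real \<Rightarrow> (real \<Rightarrow> 'a::real_normed_vector) \<Rightarrow> real" where
  "schauder_norm \<alpha> f = Sup (schauder_vals \<alpha> f)"

definition holder_space :: "real \<Rightarrow> (real \<Rightarrow> 'a::real_normed_vector) \<Rightarrow> bool" where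
  "holder_space \<alpha> f \<longleftrightarrow> continuous_on {0..1} f \<and> bdd_above (schauder_vals \<alpha> f)"

definition t0 :: "nat \<Rightarrow> nat \<Rightarrow> real" where "t0 k m = (real m - 1) / 2 ^ k"
definition t2 :: "nat \<Rightarrow> nat \<Rightarrow> real" where "t2 k m = real m / 2 ^ k"

definition ito_sum_scalar :: "nat \<Rightarrow> (real \<Rightarrow> real) \<Rightarrow> (real \<Rightarrow> real) \<Rightarrow> real \<Rightarrow> real" where
  "ito_sum_scalar k g h t = (\<Sum>m = 1..2 ^ k. g (t0 k m) * (h (min (t2 k m) t) - h (min (t0 k m) t)))"

definition qv_scalar :: "nat \<Rightarrow> (real \<Rightarrow> real) \<Rightarrow> (real \<Rightarrow> real) \<Rightarrow> real \<Rightarrow> real" where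
  "qv_scalar k g h t = (\<Sum>m = 1..2 ^ k. (g (min (t2 k m) t) - g (min (t0 k m) t)) * (h (min (t2 k m) t) - h (min (t0 k m) t)))"

definition ito_sum :: "nat \<Rightarrow> (real \<Rightarrow> real ^ 'd) \<Rightarrow> real \<Rightarrow> real ^ 'd ^ 'd" where
  "ito_sum k v t = (\<chi> i j. ito_sum_scalar k (\<lambda>s. v s $ i) (\<lambda>s. v s $ j) t)"

definition qv :: "nat \<Rightarrow> (real \<Rightarrow> real ^ 'd) \<Rightarrow> real \<Rightarrow> real ^ 'd ^ 'd" where
  "qv k v t = (\<chi> i j. qv_scalar k (\<lambda>s. v s $ i) (\<lambda>s. v s $ j) t)"

definition incr_mat :: "(real \<Rightarrow> real ^ 'd) \<Rightarrow> real \<Rightarrow> real \<Rightarrow> real ^ 'd ^ 'd" where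
  "incr_mat v s t = (\<chi> i j. v s $ i * (v t $ j - v s $ j))"

definition C_vals :: "real \<Rightarrow> (real \<Rightarrow> real ^ 'd) \<Rightarrow> real set" where
  "C_vals \<alpha> v = {norm (ito_sum k v (real m' / 2 ^ k) - ito_sum k v (real m / 2 ^ k)
                        - incr_mat v (real m / 2 ^ k) (real m' / 2 ^ k))
                   / (\<bar>(real m' - real m) / 2 ^ k\<bar>) powr (2 * \<alpha>)
                 | k m m'. m < m' \<and> m' \<le> 2 ^ k}"

end

theory Submission
  imports Defs
begin


lemma qv_scalar_eq:
  assumes t: "0 \<le> t" "t \<le> 1"
  shows "qv_scalar k g h t = g t * h t - g 0 * h 0 - ito_sum_scalar k g h t - ito_sum_scalar k h g t"
proof -
  define u where "u m = g (min (real m / 2^k) t) * h (min (real m / 2^k) t)" for m :: nat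
  have trm: "(g (min (t2 k m) t) - g (min (t0 k m) t)) * (h (min (t2 k m) t) - h (min (t0 k m) t))
      = (u m - u (m - 1)) - g (t0 k m) * (h (min (t2 k m) t) - h (min (t0 k m) t))
        - h (t0 k m) * (g (min (t2 k m) t) - g (min (t0 k m) t))" if m: "m \<in> {1..2^k}" for m
  proof -
    have e1: "t2 k m = real m / 2^k" by (simp add: t2_def)
    have e0: "t0 k m = real (m - 1) / 2^k" using m by (simp add: t0_def of_nat_diff)
    have lt: "t0 k m \<le> t2 k m" by (simp add: t0_def t2_def divide_right_mono)
    show ?thesis
    proof (cases "t0 k m \<le> t")
      case True
      then show ?thesis unfolding u_def using e1 e0 True
        by (simp add: algebra_simps min_absorb1)
    next
      case False
      then have "min (t0 k m) t = t" "min (t2 k m) t = t" using lt by auto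
      moreover have "min (real (m-1) / 2^k) t = t" "min (real m / 2^k) t = t"
        using False lt e0 e1 by auto
      ultimately show ?thesis unfolding u_def by simp
    qed
  qed
  have "qv_scalar k g h t = (\<Sum>m = 1..2 ^ k. (u m - u (m - 1)) - g (t0 k m) * (h (min (t2 k m) t) - h (min (t0 k m) t))
        - h (t0 k m) * (g (min (t2 k m) t) - g (min (t0 k m) t)))"
    unfolding qv_scalar_def by (rule sum.cong) (auto simp: trm)
  also have "\<dots> = (\<Sum>m = 1..2 ^ k. u m - u (m - 1)) - ito_sum_scalar k g h t - ito_sum_scalar k h g t"
    by (simp add: sum_subtractf ito_sum_scalar_def)
  also have "(\<Sum>m = 1..2 ^ k. u m - u (m - 1)) = u (2^k) - u 0"
    using sum_telescope''[of 0 "2^k" u] by simp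
  also have "u (2^k) = g t * h t" using t by (simp add: u_def)
  also have "u 0 = g 0 * h 0" using t by (simp add: u_def)
  finally show ?thesis .
qed

lemma ito_scalar_0: "ito_sum_scalar k g h 0 = 0"
  unfolding ito_sum_scalar_def
proof (rule sum.neutral, rule ballI)
  fix m assume m: "m \<in> {1..(2::nat)^k}"
  have "t2 k m \<ge> 0" by (simp add: t2_def)
  have "t0 k m \<ge> 0" using m by (simp add: t0_def)
  then have "min (t2 k m) 0 = 0" "min (t0 k m) 0 = 0" using \<open>t2 k m \<ge> 0\<close> by linarith+
  then show "g (t0 k m) * (h (min (t2 k m) 0) - h (min (t0 k m) 0)) = 0" by simp
qed

lemma norm_mat_sq: "(norm (M :: real^'n^'m))^2 = (\<Sum>i\<in>UNIV. \<Sum>j\<in>UNIV. (M$i$j)^2)"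
  unfolding norm_vec_def L2_set_def
  by (simp add: sum_nonneg)
lemma norm_transpose: "norm (transpose (M :: real^'n^'m)) = norm M"
proof -
  have "(norm (transpose M))^2 = (norm M)^2"
    unfolding norm_mat_sq transpose_def vec_lambda_beta by (rule sum.swap)
  then show ?thesis by (simp add: power2_eq_iff_nonneg)
qed
lemma norm_outer: "norm (\<chi> i j. (x::real^'n)$i * x$j) = (norm x)^2"
proof -
  have h: "(norm (\<chi> i j. (x::real^'n)$i * x$j))^2 = ((norm x)^2)^2"
    unfolding norm_mat_sq
    by (simp add: norm_vec_def L2_set_def sum_nonneg power_mult_distrib sum_product power2_eq_square mult_ac)
  show ?thesis by (rule power2_eq_imp_eq[OF h]) simp_all
qed

lemma bl_transpose: "bounded_linear (transpose :: real^'n^'m \<Rightarrow> real^'m^'n)"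
proof (rule bounded_linear_intro[where K=1])
  fix x y :: "real^'n^'m" and r :: real
  show "transpose (x + y) = transpose x + transpose y" by (simp add: transpose_def vec_eq_iff)
  show "transpose (r *\<^sub>R x) = r *\<^sub>R transpose x" by (simp add: transpose_def vec_eq_iff)
  show "norm (transpose x) \<le> norm x * 1" by (simp add: norm_transpose)
qed

lemma qv_eq:
  assumes "0 \<le> t" "t \<le> 1"
  shows "qv k v t = (\<chi> i j. v t$i * v t$j - v 0$i * v 0$j) - ito_sum k v t - transpose (ito_sum k v t)"
  using assms by (simp add: vec_eq_iff qv_def ito_sum_def transpose_def qv_scalar_eq)

lemma Q_incr_eq:
  fixes v :: "real \<Rightarrow> real^'d"
  shows "((\<chi> i j. v t$i * v t$j - v 0$i * v 0$j) - It - transpose It)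
       - ((\<chi> i j. v s$i * v s$j - v 0$i * v 0$j) - Is - transpose Is)
     = (\<chi> i j. (v t - v s)$i * (v t - v s)$j) - ((It - Is - incr_mat v s t) + transpose (It - Is - incr_mat v s t))"
  by (simp add: vec_eq_iff transpose_def incr_mat_def algebra_simps)

lemma Q_incr_norm:
  fixes v :: "real \<Rightarrow> real^'d"
  shows "norm (((\<chi> i j. v t$i * v t$j - v 0$i * v 0$j) - It - transpose It)
       - ((\<chi> i j. v s$i * v s$j - v 0$i * v 0$j) - Is - transpose Is))
     \<le> (norm (v t - v s))^2 + 2 * norm (It - Is - incr_mat v s t)"
proof -
  let ?A = "It - Is - incr_mat v s t"
  have "norm ((\<chi> i j. (v t - v s)$i * (v t - v s)$j) - (?A + transpose ?A))
     \<le> norm (\<chi> i j. (v t - v s)$i * (v t - v s)$j) + norm (?A + transpose ?A)"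
    by (rule norm_triangle_ineq4)
  also have "norm (?A + transpose ?A) \<le> norm ?A + norm (transpose ?A)" by (rule norm_triangle_ineq)
  finally show ?thesis unfolding Q_incr_eq norm_outer norm_transpose by simp
qed

lemma ito_cont:
  fixes v :: "real \<Rightarrow> real^'d"
  assumes "continuous_on {0..1} v"
  shows "continuous_on {0..1} (ito_sum k v)"
proof -
  have cc: "continuous_on {0..1} (\<lambda>s. v s $ i)" for i
    using assms by (rule continuous_on_component)
  have cm: "continuous_on {0..1} (\<lambda>t. v (min (real m / 2^k) t) $ i)" if "m \<le> 2^k" for m i
  proof (rule continuous_on_compose2[OF cc])
    show "continuous_on {0..1} (\<lambda>t. min (real m / 2^k) t)" by (intro continuous_intros)
    have "real m / 2^k \<le> 1" using that by (simp add: field_simps)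
    then show "(\<lambda>t. min (real m / 2^k) t) ` {0..1} \<subseteq> {0..1}" by auto
  qed
  have cm0: "continuous_on {0..1} (\<lambda>t. v (min ((real m - 1) / 2^k) t) $ i)" if "1 \<le> m" "m \<le> 2^k" for m i
  proof -
    have "(real m - 1) = real (m - 1)" using that by simp
    then show ?thesis using cm[of "m - 1" i] that by simp
  qed
  show ?thesis
    unfolding ito_sum_def ito_sum_scalar_def t0_def t2_def
    by (intro continuous_on_vec_lambda continuous_on_sum continuous_on_mult continuous_on_diff
        continuous_on_const cm cm0) auto
qed


lemma powr_pow_inv: "2 powr (real n * a) * (2 powr (-a))^n = 1"
proof -
  have "(2 powr (-a))^n = 2 powr (- a * real n)"
    by (simp add: powr_realpow[symmetric] powr_powr)
  then show ?thesis by (simp add: powr_add[symmetric])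
qed

lemma powr_dyadic: "\<bar>1 / 2^n\<bar> powr (2*a) = ((2 powr (-a))^n)^2" for a :: real
proof -
  have "\<bar>1 / 2^n\<bar> = (2::real) powr (- real n)"
    by (simp add: powr_minus powr_realpow divide_inverse)
  then have "\<bar>1 / 2^n\<bar> powr (2*a) = 2 powr (- real n * (2 * a))" by (simp add: powr_powr)
  also have "\<dots> = ((2 powr (-a))^n)^2"
    by (simp add: powr_realpow[symmetric] powr_powr power_mult[symmetric] mult_ac)
  finally show ?thesis .
qed

lemma sv_le:
  assumes "bdd_above (schauder_vals \<alpha> f)" "(p, m) \<in> schauder_index"
  shows "2 powr (real_of_int p * \<alpha>) * norm (schauder_coeff f p m) \<le> schauder_norm \<alpha> f"
  unfolding schauder_norm_def
  by (rule cSup_upper[OF _ assms(1)]) (use assms(2) in \<open>auto simp: schauder_vals_def\<close>)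

lemma sn_nonneg:
  assumes "bdd_above (schauder_vals \<alpha> f)"
  shows "0 \<le> schauder_norm \<alpha> f"
proof -
  have "(-1, 0) \<in> schauder_index" by (simp add: schauder_index_def)
  from sv_le[OF assms this] show ?thesis
    by (meson norm_ge_zero order_trans powr_ge_zero zero_le_mult_iff)
qed

lemma coeff_bound:
  assumes "bdd_above (schauder_vals \<alpha> f)" "1 \<le> m" "m \<le> 2^n"
  shows "norm (2 *\<^sub>R f ((2 * real m - 1) / 2 ^ (n + 1)) - f ((real m - 1) / 2 ^ n) - f (real m / 2 ^ n))
         \<le> schauder_norm \<alpha> f * (2 powr (-\<alpha>))^n"
proof -
  have idx: "(int n, m) \<in> schauder_index" using assms by (simp add: schauder_index_def)
  have c: "schauder_coeff f (int n) m = 2 *\<^sub>R f ((2 * real m - 1) / 2 ^ (n + 1)) - f ((real m - 1) / 2 ^ n) - f (real m / 2 ^ n)"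
    using assms by (simp add: schauder_coeff_def)
  let ?X = "schauder_coeff f (int n) m"
  have h: "2 powr (real n * \<alpha>) * norm ?X \<le> schauder_norm \<alpha> f"
    using sv_le[OF assms(1) idx] by simp
  have "norm ?X = norm ?X * (2 powr (real n * \<alpha>) * (2 powr (-\<alpha>))^n)"
    by (simp only: powr_pow_inv mult_1_right)
  also have "\<dots> = (2 powr (real n * \<alpha>) * norm ?X) * (2 powr (-\<alpha>))^n" by (simp only: mult_ac)
  also have "\<dots> \<le> schauder_norm \<alpha> f * (2 powr (-\<alpha>))^n"
    by (rule mult_right_mono[OF h]) simp
  finally show ?thesis unfolding c .
qed


lemma v_incr:
  fixes f :: "real \<Rightarrow> 'a::real_normed_vector"
  assumes bdd: "bdd_above (schauder_vals \<alpha> f)"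
    and r: "r = 2 powr (-\<alpha>)" and c: "c * (2 * r - 1) = 1" and c1: "1 \<le> c"
  shows "j + 1 \<le> 2^n \<Longrightarrow> norm (f (real (j+1) / 2^n) - f (real j / 2^n)) \<le> c * schauder_norm \<alpha> f * r^n"
proof (induction n arbitrary: j)
  case 0
  then have j: "j = 0" by simp
  have idx: "(0, 0) \<in> schauder_index" by (simp add: schauder_index_def)
  have "norm (f 1 - f 0) \<le> schauder_norm \<alpha> f"
    using sv_le[OF bdd idx] by (simp add: schauder_coeff_def)
  also have "\<dots> \<le> c * schauder_norm \<alpha> f"
    using c1 sn_nonneg[OF bdd] by (simp add: mult_le_cancel_right1)
  finally show ?case using j by simp
next
  case (Suc n)
  let ?N = "schauder_norm \<alpha> f"
  define m where "m = j div 2 + 1"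
  have m1: "1 \<le> m" and m2: "m \<le> 2^n" using Suc.prems by (auto simp: m_def)
  define a where "a = (real m - 1) / 2^n"
  define b where "b = real m / 2^n"
  define mid where "mid = (2 * real m - 1) / 2 ^ (n + 1)"
  have IH: "norm (f b - f a) \<le> c * ?N * r^n"
  proof -
    have "norm (f (real (m - 1 + 1) / 2^n) - f (real (m - 1) / 2^n)) \<le> c * ?N * r^n"
      using Suc.IH[of "m - 1"] m1 m2 by simp
    moreover have "real (m - 1 + 1) = real m" "real (m - 1) = real m - 1" using m1 by auto
    ultimately show ?thesis by (simp add: a_def b_def)
  qed
  have G: "norm (2 *\<^sub>R f mid - f a - f b) \<le> ?N * r^n"
    using coeff_bound[OF bdd m1 m2] by (simp add: a_def b_def mid_def r)
  have crel: "(c + 1) / 2 = c * r" using c by (simp add: field_simps)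
  have Nn: "0 \<le> ?N" by (rule sn_nonneg[OF bdd])
  have r0: "0 \<le> r" by (simp add: r)
  have bound: "norm (x + y) / 2 \<le> c * ?N * r ^ Suc n" if "norm x \<le> c * ?N * r^n" "norm y \<le> ?N * r^n" for x y :: 'a
  proof -
    have "norm (x + y) \<le> c * ?N * r^n + ?N * r^n" using that norm_triangle_ineq[of x y] by linarith
    then have "norm (x + y) / 2 \<le> (c + 1) / 2 * (?N * r^n)" by (simp add: field_simps)
    also have "\<dots> = c * ?N * r ^ Suc n" unfolding crel by (simp add: mult_ac)
    finally show ?thesis .
  qed
  have bound': "norm (x - y) / 2 \<le> c * ?N * r ^ Suc n" if "norm x \<le> c * ?N * r^n" "norm y \<le> ?N * r^n" for x y :: 'a
    using bound[of x "- y"] that by simp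
  have hh: "(1/2) *\<^sub>R x + (1/2) *\<^sub>R x = x" for x :: 'a
    by (simp flip: scaleR_add_left)
  have e1: "f mid - f a = (1/2) *\<^sub>R ((f b - f a) + (2 *\<^sub>R f mid - f a - f b))"
    by (simp add: algebra_simps hh)
  have e2: "f b - f mid = (1/2) *\<^sub>R ((f b - f a) - (2 *\<^sub>R f mid - f a - f b))"
    by (simp add: algebra_simps hh)
  have n1: "norm (f mid - f a) \<le> c * ?N * r ^ Suc n"
    unfolding e1 using bound[OF IH G] by simp
  have n2: "norm (f b - f mid) \<le> c * ?N * r ^ Suc n"
    unfolding e2 using bound'[OF IH G] by simp
  show ?case
  proof (cases "even j")
    case True
    then have "real j = 2 * real m - 2" unfolding m_def by (auto elim!: evenE)
    then have "real j / 2 ^ Suc n = a" "real (j+1) / 2 ^ Suc n = mid"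
      by (auto simp: a_def mid_def field_simps)
    then show ?thesis using n1 by simp
  next
    case False
    then have "real j = 2 * real m - 1" unfolding m_def by (auto elim!: oddE)
    then have "real j / 2 ^ Suc n = mid" "real (j+1) / 2 ^ Suc n = b"
      by (auto simp: b_def mid_def field_simps)
    then show ?thesis using n2 by simp
  qed
qed


lemma A_bound:
  fixes v :: "real \<Rightarrow> real^'d"
  assumes lim: "\<And>t. t \<in> {0..1} \<Longrightarrow> (\<lambda>k. ito_sum k v t) \<longlonglongrightarrow> I t"
    and bdd: "bdd_above (C_vals \<alpha> v)" and j: "j + 1 \<le> 2^n"
  shows "norm (I (real (j+1) / 2^n) - I (real j / 2^n) - incr_mat v (real j / 2^n) (real (j+1) / 2^n))
         \<le> Sup (C_vals \<alpha> v) * ((2 powr (-\<alpha>))^n)^2"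
proof -
  define s where "s = real j / 2^n"
  define t where "t = real (j+1) / 2^n"
  define R where "R = ((2 powr (-\<alpha>))^n)^2"
  have R0: "0 < R" by (simp add: R_def)
  have j': "real (j+1) \<le> 2^n" using j by (metis of_nat_le_iff of_nat_numeral of_nat_power)
  have st: "s \<in> {0..1}" "t \<in> {0..1}" using j j' by (auto simp: s_def t_def field_simps)
  have ev: "\<exists>N. \<forall>k\<ge>N. norm (ito_sum k v t - ito_sum k v s - incr_mat v s t) \<le> Sup (C_vals \<alpha> v) * R"
  proof (intro exI allI impI)
    fix k assume nk: "n \<le> k"
    define m where "m = j * 2^(k-n)"
    define m' where "m' = (j+1) * 2^(k-n)"
    have pk: "(2::real)^k = 2^(k-n) * 2^n" using nk by (simp add: power_add[symmetric])
    have pk': "(2::nat)^k = 2^(k-n) * 2^n" using nk by (simp add: power_add[symmetric])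
    have ms: "real m / 2^k = s" "real m' / 2^k = t" "(real m' - real m) / 2^k = 1 / 2^n"
      unfolding m_def m'_def s_def t_def pk by (auto simp: field_simps)
    have mlt1: "m < m'" unfolding m_def m'_def by simp
    have "(j+1) * 2^(k-n) \<le> 2^n * 2^(k-n)" using j by (rule mult_right_mono) simp
    then have mlt: "m < m'" "m' \<le> 2^k" using mlt1 unfolding m'_def pk' by (auto simp: mult_ac)
    have mem: "norm (ito_sum k v (real m' / 2^k) - ito_sum k v (real m / 2^k) - incr_mat v (real m / 2^k) (real m' / 2^k))
        / (\<bar>(real m' - real m) / 2^k\<bar>) powr (2 * \<alpha>) \<in> C_vals \<alpha> v"
      unfolding C_vals_def using mlt by blast
    have "norm (ito_sum k v t - ito_sum k v s - incr_mat v s t) / R \<le> Sup (C_vals \<alpha> v)"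
      using cSup_upper[OF mem bdd] unfolding ms powr_dyadic R_def .
    then show "norm (ito_sum k v t - ito_sum k v s - incr_mat v s t) \<le> Sup (C_vals \<alpha> v) * R"
      using R0 by (simp add: pos_divide_le_eq)
  qed
  have "(\<lambda>k. norm (ito_sum k v t - ito_sum k v s - incr_mat v s t)) \<longlonglongrightarrow> norm (I t - I s - incr_mat v s t)"
    by (intro tendsto_intros lim st)
  from LIMSEQ_le_const2[OF this ev] show ?thesis by (simp add: s_def t_def R_def)
qed



theorem mainTheorem16:
  fixes \<alpha> :: real
  assumes "0 < \<alpha>" and "\<alpha> < 1/2"
  shows "\<exists>K. \<forall>v :: real \<Rightarrow> real ^ 'd.
           holder_space \<alpha> v \<and> (\<exists>I. uniform_limit {0..1} (\<lambda>k. ito_sum k v) I sequentially) \<longrightarrow>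
           (\<exists>Q. uniform_limit {0..1} (\<lambda>k. qv k v) Q sequentially \<and>
                (bdd_above (C_vals \<alpha> v) \<longrightarrow>
                   holder_space (2 * \<alpha>) Q \<and>
                   schauder_norm (2 * \<alpha>) Q \<le> K * (Sup (C_vals \<alpha> v) + (schauder_norm \<alpha> v)\<^sup>2)))"
proof -
  define r where "r = (2::real) powr (-\<alpha>)"
  define c where "c = 1 / (2 * r - 1)"
  have r0: "0 < r" by (simp add: r_def)
  have r1: "r \<le> 1" unfolding r_def using powr_mono[of "-\<alpha>" 0 2] assms(1) by simp
  have rh: "1/2 < r"
  proof -
    have "(2::real) powr (-1) < 2 powr (-\<alpha>)" using assms by (intro powr_less_mono) auto
    then show ?thesis by (simp add: r_def powr_minus)
  qed
  have crel: "c * (2 * r - 1) = 1" using rh by (simp add: c_def)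
  have c1: "1 \<le> c" using rh r1 by (simp add: c_def field_simps)
  show ?thesis
  proof (intro exI[of _ "4 + 2 * c^2"] allI impI)
    fix v :: "real \<Rightarrow> real^'d"
    assume H: "holder_space \<alpha> v \<and> (\<exists>I. uniform_limit {0..1} (\<lambda>k. ito_sum k v) I sequentially)"
    then have cv: "continuous_on {0..1} v" and bv: "bdd_above (schauder_vals \<alpha> v)"
      unfolding holder_space_def by auto
    from H obtain I where UI: "uniform_limit {0..1} (\<lambda>k. ito_sum k v) I sequentially" by auto
    define F where "F t = (\<chi> i j. v t$i * v t$j - v 0$i * v 0$j)" for t
    define Q where "Q t = F t - I t - transpose (I t)" for t
    have UQ0: "uniform_limit {0..1} (\<lambda>k t. F t - ito_sum k v t - transpose (ito_sum k v t)) Q sequentially"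
      unfolding Q_def
      by (intro uniform_limit_minus uniform_limit_const UI bounded_linear.uniform_limit[OF bl_transpose])
    have "uniform_limit {0..1} (\<lambda>k. qv k v) Q sequentially \<longleftrightarrow>
          uniform_limit {0..1} (\<lambda>k t. F t - ito_sum k v t - transpose (ito_sum k v t)) Q sequentially"
      by (rule uniform_limit_cong) (auto simp: qv_eq F_def)
    with UQ0 have UQ: "uniform_limit {0..1} (\<lambda>k. qv k v) Q sequentially" by simp
    have lim: "\<And>t. t \<in> {0..1} \<Longrightarrow> (\<lambda>k. ito_sum k v t) \<longlonglongrightarrow> I t"
      by (rule tendsto_uniform_limitI[OF UI])
    have "(\<lambda>k. ito_sum k v 0) = (\<lambda>k. 0)"
      by (simp add: fun_eq_iff vec_eq_iff ito_sum_def ito_scalar_0)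
    then have I0: "I 0 = 0" using lim[of 0] by (simp add: LIMSEQ_const_iff)
    have Q0: "Q 0 = 0" by (simp add: Q_def F_def I0 vec_eq_iff transpose_def)
    show "\<exists>Q. uniform_limit {0..1} (\<lambda>k. qv k v) Q sequentially \<and>
                (bdd_above (C_vals \<alpha> v) \<longrightarrow>
                   holder_space (2 * \<alpha>) Q \<and>
                   schauder_norm (2 * \<alpha>) Q \<le> (4 + 2 * c^2) * (Sup (C_vals \<alpha> v) + (schauder_norm \<alpha> v)\<^sup>2))"
    proof (intro exI[of _ Q] conjI impI UQ)
      assume bC: "bdd_above (C_vals \<alpha> v)"
      define Cs where "Cs = Sup (C_vals \<alpha> v)"
      define N where "N = schauder_norm \<alpha> v"
      have Cs0: "0 \<le> Cs"
      proof -
        have "norm (ito_sum 0 v (real (1::nat) / 2 ^ 0) - ito_sum 0 v (real (0::nat) / 2 ^ 0)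
                  - incr_mat v (real (0::nat) / 2 ^ 0) (real (1::nat) / 2 ^ 0))
              / (\<bar>(real (1::nat) - real (0::nat)) / 2 ^ 0\<bar>) powr (2 * \<alpha>) \<in> C_vals \<alpha> v"
          unfolding C_vals_def
          by (rule CollectI, rule exI[of _ "0::nat"], rule exI[of _ "0::nat"], rule exI[of _ "1::nat"]) simp
        from cSup_upper[OF this bC] show ?thesis unfolding Cs_def
          by (meson divide_nonneg_nonneg norm_ge_zero order_trans powr_ge_zero)
      qed
      have N0: "0 \<le> N" unfolding N_def by (rule sn_nonneg[OF bv])
      have vinc: "norm (v (real (j+1) / 2^n) - v (real j / 2^n)) \<le> c * N * r^n" if "j + 1 \<le> 2^n" for j n
        unfolding N_def by (rule v_incr[OF bv r_def crel c1 that])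
      have Qinc: "norm (Q (real (j+1) / 2^n) - Q (real j / 2^n)) \<le> (2 * Cs + c^2 * N^2) * (r^n)^2"
        if j: "j + 1 \<le> 2^n" for j n
      proof -
        let ?s = "real j / 2^n" and ?t = "real (j+1) / 2^n"
        have "norm (Q ?t - Q ?s) \<le> (norm (v ?t - v ?s))^2 + 2 * norm (I ?t - I ?s - incr_mat v ?s ?t)"
          unfolding Q_def F_def by (rule Q_incr_norm)
        also have "(norm (v ?t - v ?s))^2 \<le> (c * N * r^n)^2"
          by (rule power_mono[OF vinc[OF j]]) simp
        also have "norm (I ?t - I ?s - incr_mat v ?s ?t) \<le> Cs * (r^n)^2"
          unfolding Cs_def r_def by (rule A_bound[OF lim bC j])
        finally show ?thesis by (simp add: algebra_simps power_mult_distrib)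
      qed
      define B where "B = 2 * (2 * Cs + c^2 * N^2)"
      have B0: "0 \<le> B" using Cs0 by (simp add: B_def)
      have vals: "x \<le> B" if x: "x \<in> schauder_vals (2 * \<alpha>) Q" for x
      proof -
        obtain p m where xe: "x = 2 powr (real_of_int p * (2 * \<alpha>)) * norm (schauder_coeff Q p m)"
          and pm: "(p, m) \<in> schauder_index"
          using x unfolding schauder_vals_def by blast
        show ?thesis
        proof (cases "p = -1 \<and> m = 0")
          case True
          then show ?thesis using xe B0 Q0 by (simp add: schauder_coeff_def)
        next
          case False
          with pm obtain n where pn: "p = int n" and mle: "m \<le> 2^n"
            unfolding schauder_index_def by (auto, metis nat_int nonneg_int_cases)
          show ?thesis
          proof (cases "m = 0")
            case True
            show ?thesis
            proof (cases "n = 0")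
              case True
              have "norm (Q (real (0+1) / 2^0) - Q (real 0 / 2^0)) \<le> (2 * Cs + c^2 * N^2) * (r^0)^2"
                by (rule Qinc) simp
              moreover have "0 \<le> c^2 * N^2" by simp
              ultimately show ?thesis using xe pn \<open>m = 0\<close> True Cs0
                by (simp add: schauder_coeff_def B_def del: zero_le_mult_iff) (smt (verit) zero_le_power2 mult_nonneg_nonneg)
            next
              case False
              then show ?thesis using xe pn \<open>m = 0\<close> B0 by (simp add: schauder_coeff_def)
            qed
          next
            case False
            then have m1: "1 \<le> m" by simp
            define a where "a = (real m - 1) / 2 ^ n"
            define b where "b = real m / 2 ^ n"
            define mid where "mid = (2 * real m - 1) / 2 ^ (n + 1)"
            have ce: "schauder_coeff Q p m = (Q mid - Q a) - (Q b - Q mid)"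
              using m1 mle pn by (simp add: schauder_coeff_def a_def b_def mid_def algebra_simps scaleR_2)
            have j1: "2 * m - 2 + 1 \<le> 2 ^ (n+1)" "2 * m - 1 + 1 \<le> 2 ^ (n+1)" using m1 mle by auto
            have p1: "real (2 * m - 2 + 1) / 2 ^ (n+1) = mid" "real (2 * m - 2) / 2 ^ (n+1) = a"
              using m1 by (auto simp: mid_def a_def of_nat_diff field_simps)
            have p2: "real (2 * m - 1 + 1) / 2 ^ (n+1) = b" "real (2 * m - 1) / 2 ^ (n+1) = mid"
              using m1 by (auto simp: mid_def b_def of_nat_diff field_simps)
            have q1: "norm (Q mid - Q a) \<le> (2 * Cs + c^2 * N^2) * (r^(n+1))^2"
              using Qinc[OF j1(1)] unfolding p1 .
            have q2: "norm (Q b - Q mid) \<le> (2 * Cs + c^2 * N^2) * (r^(n+1))^2"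
              using Qinc[OF j1(2)] unfolding p2 .
            have "norm (schauder_coeff Q p m) \<le> norm (Q mid - Q a) + norm (Q b - Q mid)"
              unfolding ce by (rule norm_triangle_ineq4)
            also have "\<dots> \<le> 2 * ((2 * Cs + c^2 * N^2) * (r^(n+1))^2)" using q1 q2 by linarith
            also have "\<dots> = B * (r^(n+1))^2" by (simp only: B_def mult.assoc)
            finally have cn: "norm (schauder_coeff Q p m) \<le> B * (r^(n+1))^2" .
            have rr: "(r^(n+1))^2 = r^2 * (2 powr (-(2*\<alpha>)))^n"
            proof -
              have "r^2 = 2 powr (-(2*\<alpha>))" unfolding r_def
                by (simp add: powr_realpow[symmetric] powr_powr mult.commute)
              moreover have "(r^(n+1))^2 = r^2 * (r^n)^2" by (simp add: power_mult_distrib)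
              moreover have "(r^n)^2 = (r^2)^n" by (simp only: power_mult[symmetric] mult.commute)
              ultimately show ?thesis by simp
            qed
            have "x \<le> 2 powr (real n * (2 * \<alpha>)) * (B * (r^(n+1))^2)"
              unfolding xe using cn pn by (simp add: mult_left_mono)
            also have "\<dots> = B * r^2 * (2 powr (real n * (2 * \<alpha>)) * (2 powr (-(2*\<alpha>)))^n)"
              unfolding rr by (simp only: mult_ac)
            also have "\<dots> = B * r^2" by (simp only: powr_pow_inv mult_1_right)
            also have "\<dots> \<le> B * 1" using B0 r0 r1 by (intro mult_left_mono) (simp_all add: power_le_one)
            finally show ?thesis by simp
          qed
        qed
      qed
      have ne: "schauder_vals (2 * \<alpha>) Q \<noteq> {}"
        unfolding schauder_vals_def schauder_index_def by blast
      have bddQ: "bdd_above (schauder_vals (2 * \<alpha>) Q)" using vals by (intro bdd_aboveI) 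
      have contI: "continuous_on {0..1} I"
        by (rule uniform_limit_theorem[OF always_eventually UI]) (auto intro: ito_cont[OF cv])
      have contF: "continuous_on {0..1} F"
        unfolding F_def by (intro continuous_on_vec_lambda continuous_intros cv)
      have contQ: "continuous_on {0..1} Q"
        unfolding Q_def by (intro continuous_on_diff contF contI bounded_linear.continuous_on[OF bl_transpose])
      have "schauder_norm (2 * \<alpha>) Q \<le> B"
        unfolding schauder_norm_def by (rule cSup_least[OF ne vals])
      also have "B \<le> (4 + 2 * c^2) * (Cs + N^2)"
        using Cs0 by (simp add: B_def algebra_simps)
      finally show "schauder_norm (2 * \<alpha>) Q \<le> (4 + 2 * c^2) * (Sup (C_vals \<alpha> v) + (schauder_norm \<alpha> v)\<^sup>2)"
        by (simp add: Cs_def N_def)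
      show "holder_space (2 * \<alpha>) Q" unfolding holder_space_def using contQ bddQ by simp
    qed
  qed
qed

end
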